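(* Let $1\le p\le\infty$ and $E=\mathcal{L}^p(I)$. If $(f_m)$ is a Schauder basis of $E$ and $\Lambda<1/2$, then $(f_m*_T0)$ is a Schauder basis of $E$. If moreover $(f_m)$ is bounded, then the basis $(f_m*_T0)$ is also bounded.
   Context: Let $N\ge 2$, $I=[x_0,x_N]$, $\Delta: x_0<\dots<x_N$ a partition, $L_n(x)=a_nx+b_n$ affine with $L_n(x_0)=x_{n-1}$, $L_n(x_N)=x_n$, $I_1=[x_0,x_1]$, $I_n=(x_{n-1},x_n]$ for $n\ge2$, and $\alpha=(\alpha_1,\dots,\alpha_N)\in(\mathcal{L}^\infty(I))^N$ with $\Lambda:=\operatorname{ess\,sup}\{|\alpha_n(x)|:x\in I,n=1,\dots,N\}<1$. For $f,b\in E$, $f*_Tb$ is the unique fixed point in $E$ of the contraction $Tg(x):=f(x)+\alpha_n(L_n^{-1}(x))(g-b)(L_n^{-1}(x))$, $x\in I_n$; $0$ is the null function. A sequence $(x_m)$ is bounded if there are constants $0<k\le K$ with $k\le\|x_m\|_p\le K$ for all $m$. *)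

theory Defs
  imports "HOL-Analysis.Analysis" "HOL-Probability.Essential_Supremum"
begin

definition Ivl :: "(nat \<Rightarrow> real) \<Rightarrow> nat \<Rightarrow> real set" where
  "Ivl xs N = {xs 0 .. xs N}"

definition Isub :: "(nat \<Rightarrow> real) \<Rightarrow> nat \<Rightarrow> real set" where
  "Isub xs n = (if n = 1 then {xs 0 .. xs 1} else {xs (n - 1) <.. xs n})"

text \<open>The affine map L_n(t) = a_n t + b_n with L_n(x_0) = x_{n-1}, L_n(x_N) = x_n,
  and its inverse.\<close>
definition Lmap :: "(nat \<Rightarrow> real) \<Rightarrow> nat \<Rightarrow> nat \<Rightarrow> real \<Rightarrow> real" where
  "Lmap xs N n t = xs (n - 1) + (xs n - xs (n - 1)) / (xs N - xs 0) * (t - xs 0)"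

definition Linv :: "(nat \<Rightarrow> real) \<Rightarrow> nat \<Rightarrow> nat \<Rightarrow> real \<Rightarrow> real" where
  "Linv xs N n y = xs 0 + (xs N - xs 0) / (xs n - xs (n - 1)) * (y - xs (n - 1))"

text \<open>Membership in L^p(I), 1 <= p <= infinity (functions, identified up to a.e. equality
  through the seminorm).\<close>
definition inLp :: "ereal \<Rightarrow> (nat \<Rightarrow> real) \<Rightarrow> nat \<Rightarrow> (real \<Rightarrow> real) \<Rightarrow> bool" where
  "inLp p xs N f \<longleftrightarrow> f \<in> borel_measurable (lebesgue_on (Ivl xs N)) \<and>
     (if p = \<infinity> then esssup (lebesgue_on (Ivl xs N)) (\<lambda>t. ereal \<bar>f t\<bar>) < \<infinity>
      else integrable (lebesgue_on (Ivl xs N)) (\<lambda>t. \<bar>f t\<bar> powr real_of_ereal p))"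

definition Lpnorm :: "ereal \<Rightarrow> (nat \<Rightarrow> real) \<Rightarrow> nat \<Rightarrow> (real \<Rightarrow> real) \<Rightarrow> real" where
  "Lpnorm p xs N f =
     (if p = \<infinity> then real_of_ereal (esssup (lebesgue_on (Ivl xs N)) (\<lambda>t. ereal \<bar>f t\<bar>))
      else (integral\<^sup>L (lebesgue_on (Ivl xs N)) (\<lambda>t. \<bar>f t\<bar> powr real_of_ereal p))
             powr (1 / real_of_ereal p))"

definition schauder_basis :: "ereal \<Rightarrow> (nat \<Rightarrow> real) \<Rightarrow> nat \<Rightarrow> (nat \<Rightarrow> real \<Rightarrow> real) \<Rightarrow> bool" where
  "schauder_basis p xs N fs \<longleftrightarrow> (\<forall>m. inLp p xs N (fs m)) \<and>
     (\<forall>h. inLp p xs N h \<longrightarrow>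
        (\<exists>!c :: nat \<Rightarrow> real.
           (\<lambda>n. Lpnorm p xs N (\<lambda>t. h t - (\<Sum>m<n. c m * fs m t))) \<longlonglongrightarrow> 0))"

definition bounded_seq :: "ereal \<Rightarrow> (nat \<Rightarrow> real) \<Rightarrow> nat \<Rightarrow> (nat \<Rightarrow> real \<Rightarrow> real) \<Rightarrow> bool" where
  "bounded_seq p xs N fs \<longleftrightarrow>
     (\<exists>k K. 0 < k \<and> k \<le> K \<and> (\<forall>m. k \<le> Lpnorm p xs N (fs m) \<and> Lpnorm p xs N (fs m) \<le> K))"

definition Lambda :: "(nat \<Rightarrow> real) \<Rightarrow> nat \<Rightarrow> (nat \<Rightarrow> real \<Rightarrow> real) \<Rightarrow> ereal" where
  "Lambda xs N \<alpha> = esssup (lebesgue_on (Ivl xs N))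
      (\<lambda>t. Max ((\<lambda>n. ereal \<bar>\<alpha> n t\<bar>) ` {1..N}))"

definition Top :: "(nat \<Rightarrow> real) \<Rightarrow> nat \<Rightarrow> (nat \<Rightarrow> real \<Rightarrow> real) \<Rightarrow>
    (real \<Rightarrow> real) \<Rightarrow> (real \<Rightarrow> real) \<Rightarrow> (real \<Rightarrow> real) \<Rightarrow> real \<Rightarrow> real" where
  "Top xs N \<alpha> f b g t =
     f t + (\<Sum>n\<in>{1..N}. if t \<in> Isub xs n
        then \<alpha> n (Linv xs N n t) * (g (Linv xs N n t) - b (Linv xs N n t)) else 0)"

text \<open>f *_T b: the (a.e. unique) fixed point of T in E.\<close>
definition fractal :: "ereal \<Rightarrow> (nat \<Rightarrow> real) \<Rightarrow> nat \<Rightarrow> (nat \<Rightarrow> real \<Rightarrow> real) \<Rightarrow>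
    (real \<Rightarrow> real) \<Rightarrow> (real \<Rightarrow> real) \<Rightarrow> real \<Rightarrow> real" where
  "fractal p xs N \<alpha> f b = (SOME g. inLp p xs N g \<and>
      (AE t in lebesgue_on (Ivl xs N). Top xs N \<alpha> f b g t = g t))"

end

theory Submission
  imports Defs
begin
locale fs_setting =
  fixes p :: ereal and N :: nat and xs :: "nat \<Rightarrow> real" and \<alpha> :: "nat \<Rightarrow> real \<Rightarrow> real"
  assumes N2: "N \<ge> 2"
    and inc: "\<And>i. i < N \<Longrightarrow> xs i < xs (Suc i)"
    and p1: "1 \<le> p"
    and \<alpha>m: "\<And>n. n \<in> {1..N} \<Longrightarrow> \<alpha> n \<in> borel_measurable (lebesgue_on (Ivl xs N))"
    and Lam: "Lambda xs N \<alpha> < 1 / 2"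
begin

abbreviation "I \<equiv> Ivl xs N"
abbreviation "M \<equiv> lebesgue_on I"
abbreviation "Lp \<equiv> inLp p xs N"
abbreviation "nrm \<equiv> Lpnorm p xs N"

lemma xs_less: "i < j \<Longrightarrow> j \<le> N \<Longrightarrow> xs i < xs j"
proof (induction j)
  case 0 then show ?case by simp
next
  case (Suc j)
  then show ?case using inc[of j] by (cases "i = j") auto
qed

lemma xs_le: "i \<le> j \<Longrightarrow> j \<le> N \<Longrightarrow> xs i \<le> xs j"
  using xs_less[of i j] by (cases "i = j") auto

lemma ab: "xs 0 < xs N" using xs_less[of 0 N] N2 by simp

lemma I_sets[simp]: "I \<in> sets lebesgue" by (simp add: Ivl_def)
lemma space_M[simp]: "space M = I" by simp

lemma M_nontriv: "emeasure M (space M) \<noteq> 0"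
  using ab by (simp add: Ivl_def emeasure_restrict_space)

lemma not_AE_False: "\<not> (AE t in M. False)"
  using M_nontriv ae_filter_eq_bot_iff[of M] by (simp add: eventually_False)


definition "q = real_of_ereal p"

lemma q1: "p \<noteq> \<infinity> \<Longrightarrow> 1 \<le> q"
  using p1 unfolding q_def by (cases p) auto

lemma p_eq: "p \<noteq> \<infinity> \<Longrightarrow> p = ereal q"
  using p1 unfolding q_def by (cases p) auto

lemma Lp_fin: "p \<noteq> \<infinity> \<Longrightarrow> Lp f \<longleftrightarrow> f \<in> borel_measurable M \<and> integrable M (\<lambda>t. \<bar>f t\<bar> powr q)"
  unfolding inLp_def q_def by simp

lemma nrm_fin: "p \<noteq> \<infinity> \<Longrightarrow> nrm f = (integral\<^sup>L M (\<lambda>t. \<bar>f t\<bar> powr q)) powr (1 / q)"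
  unfolding Lpnorm_def q_def by simp

lemma Lp_inf: "p = \<infinity> \<Longrightarrow> Lp f \<longleftrightarrow> f \<in> borel_measurable M \<and> esssup M (\<lambda>t. ereal \<bar>f t\<bar>) < \<infinity>"
  unfolding inLp_def by simp

lemma nrm_inf: "p = \<infinity> \<Longrightarrow> nrm f = real_of_ereal (esssup M (\<lambda>t. ereal \<bar>f t\<bar>))"
  unfolding Lpnorm_def by simp

lemma Lp_meas: "Lp f \<Longrightarrow> f \<in> borel_measurable M"
  unfolding inLp_def by simp

lemma Linf_bound:
  assumes "p = \<infinity>" "Lp f"
  shows "AE t in M. \<bar>f t\<bar> \<le> nrm f" "0 \<le> nrm f"
proof -
  let ?E = "esssup M (\<lambda>t. ereal \<bar>f t\<bar>)"
  have fin: "?E < \<infinity>" using assms Lp_inf by auto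
  have ae: "AE t in M. ereal \<bar>f t\<bar> \<le> ?E" by (rule esssup_AE)
  have nn: "0 \<le> ?E"
  proof (rule ccontr)
    assume "\<not> 0 \<le> ?E"
    then have "?E < 0" by auto
    with ae have "AE t in M. False"
    proof (elim eventually_mono)
      fix t assume "ereal \<bar>f t\<bar> \<le> ?E" "?E < 0"
      moreover have "0 \<le> ereal \<bar>f t\<bar>" by simp
      ultimately show False by (meson leD order_trans)
    qed
    with not_AE_False show False by simp
  qed
  then obtain r where r: "?E = ereal r" "0 \<le> r" using fin nn by (cases ?E) auto
  have "nrm f = r" using r(1) nrm_inf[OF assms(1), of f] by simp
  then show "AE t in M. \<bar>f t\<bar> \<le> nrm f" "0 \<le> nrm f" using ae r by auto
qed

lemma Linf_intro:
  assumes "p = \<infinity>" "f \<in> borel_measurable M" "0 \<le> C" "AE t in M. \<bar>f t\<bar> \<le> C"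
  shows "Lp f" "nrm f \<le> C"
proof -
  let ?E = "esssup M (\<lambda>t. ereal \<bar>f t\<bar>)"
  have m: "(\<lambda>t. ereal \<bar>f t\<bar>) \<in> borel_measurable M" using assms(2) by measurable
  have ae: "AE t in M. ereal \<bar>f t\<bar> \<le> ereal C" using assms(4) by (rule eventually_mono) simp
  have le: "?E \<le> ereal C" by (rule esssup_I[OF m ae])
  have "?E < \<infinity>" by (rule le_less_trans[OF le]) simp
  then show "Lp f" using Lp_inf[OF assms(1)] assms(2) by blast
  show "nrm f \<le> C" unfolding nrm_inf[OF assms(1)] using le assms(3) by (cases ?E) auto
qed

lemma nrm_nonneg: "Lp f \<Longrightarrow> 0 \<le> nrm f"
proof (cases "p = \<infinity>")
  case True
  assume "Lp f"
  then show ?thesis using Linf_bound(2)[OF True] by blast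
next
  case False
  then show ?thesis unfolding nrm_fin[OF False] by simp
qed

lemma Lp_abs:
  assumes "Lp f" shows "Lp (\<lambda>t. \<bar>f t\<bar>)"
proof -
  have m: "f \<in> borel_measurable M" using assms by (rule Lp_meas)
  have "(\<lambda>t. \<bar>f t\<bar>) \<in> borel_measurable M" using m by measurable
  then show ?thesis using assms unfolding inLp_def by (cases "p = \<infinity>") auto
qed

lemma nrm_abs[simp]: "nrm (\<lambda>t. \<bar>f t\<bar>) = nrm f"
  unfolding Lpnorm_def by simp

lemma nrm_uminus[simp]: "nrm (\<lambda>t. - f t) = nrm f"
  unfolding Lpnorm_def by simp

lemma Lp_uminus:
  assumes "Lp f" shows "Lp (\<lambda>t. - f t)"
proof -
  have m: "f \<in> borel_measurable M" using assms by (rule Lp_meas)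
  have "(\<lambda>t. - f t) \<in> borel_measurable M" using m by measurable
  then show ?thesis using assms unfolding inLp_def by (cases "p = \<infinity>") auto
qed

lemma Lp_mono_AE:
  assumes f: "f \<in> borel_measurable M" and g: "Lp g" and ae: "AE t in M. \<bar>f t\<bar> \<le> \<bar>g t\<bar>"
  shows "Lp f" "nrm f \<le> nrm g"
proof -
  have "Lp f \<and> nrm f \<le> nrm g"
  proof (cases "p = \<infinity>")
    case True
    note gb = Linf_bound[OF True g]
    have "AE t in M. \<bar>f t\<bar> \<le> nrm g" using ae gb(1) by eventually_elim auto
    then show ?thesis using Linf_intro[OF True f gb(2)] by auto
  next
    case False
    have q0: "0 < q" using q1[OF False] by simp
    have ig: "integrable M (\<lambda>t. \<bar>g t\<bar> powr q)" using g False Lp_fin by auto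
    have mf: "(\<lambda>t. \<bar>f t\<bar> powr q) \<in> borel_measurable M" using f by measurable
    have ae2: "AE t in M. norm (\<bar>f t\<bar> powr q) \<le> norm (\<bar>g t\<bar> powr q)"
      using ae by eventually_elim (use q0 in \<open>auto intro: powr_mono2\<close>)
    have if_: "integrable M (\<lambda>t. \<bar>f t\<bar> powr q)"
      by (rule Bochner_Integration.integrable_bound[OF ig mf ae2])
    have le: "integral\<^sup>L M (\<lambda>t. \<bar>f t\<bar> powr q) \<le> integral\<^sup>L M (\<lambda>t. \<bar>g t\<bar> powr q)"
      using ae2 by (intro integral_mono_AE[OF if_ ig]) (auto elim!: eventually_mono)
    have "nrm f \<le> nrm g" unfolding nrm_fin[OF False]
      by (rule powr_mono2[OF _ _ le]) (use q0 in \<open>auto intro!: integral_nonneg_AE\<close>)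
    then show ?thesis using if_ f Lp_fin[OF False] by blast
  qed
  then show "Lp f" "nrm f \<le> nrm g" by auto
qed

lemma Lp_cong_AE:
  assumes "f \<in> borel_measurable M" "Lp g" "AE t in M. f t = g t"
  shows "Lp f" "nrm f = nrm g"
proof -
  have a1: "AE t in M. \<bar>f t\<bar> \<le> \<bar>g t\<bar>" using assms(3) by (auto elim!: eventually_mono)
  have a2: "AE t in M. \<bar>g t\<bar> \<le> \<bar>f t\<bar>" using assms(3) by (auto elim!: eventually_mono)
  show lf: "Lp f" using Lp_mono_AE[OF assms(1,2) a1] by auto
  have "nrm f \<le> nrm g" using Lp_mono_AE[OF assms(1,2) a1] by auto
  moreover have "nrm g \<le> nrm f" using Lp_mono_AE[OF Lp_meas[OF assms(2)] lf a2] by auto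
  ultimately show "nrm f = nrm g" by simp
qed

lemma Lp_zero: "Lp (\<lambda>_. 0)"
proof (cases "p = \<infinity>")
  case True then show ?thesis using Linf_intro(1)[OF True, of "\<lambda>_. 0" 0] by auto
next
  case False then show ?thesis by (simp add: Lp_fin)
qed

lemma Lp_cmult: "Lp f \<Longrightarrow> Lp (\<lambda>t. c * f t)"
proof (cases "p = \<infinity>")
  case True
  assume f: "Lp f"
  note b = Linf_bound[OF True f]
  have "AE t in M. \<bar>c * f t\<bar> \<le> \<bar>c\<bar> * nrm f" using b(1)
    by eventually_elim (auto simp: abs_mult intro: mult_left_mono)
  moreover have "(\<lambda>t. c * f t) \<in> borel_measurable M" using Lp_meas[OF f] by measurable
  moreover have "0 \<le> \<bar>c\<bar> * nrm f" using b(2) by simp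
  ultimately show ?thesis using Linf_intro(1)[OF True] by blast
next
  case False
  assume f: "Lp f"
  have "integrable M (\<lambda>t. \<bar>f t\<bar> powr q)" using f Lp_fin[OF False] by blast
  then have "integrable M (\<lambda>t. \<bar>c\<bar> powr q * \<bar>f t\<bar> powr q)" by (rule integrable_mult_right)
  then have "integrable M (\<lambda>t. \<bar>c * f t\<bar> powr q)" by (simp add: abs_mult powr_mult)
  moreover have "(\<lambda>t. c * f t) \<in> borel_measurable M" using Lp_meas[OF f] by measurable
  ultimately show ?thesis using Lp_fin[OF False] by blast
qed

end

lemma convex_pt:
  fixes u v A B q :: real
  assumes q: "1 \<le> q" and u: "0 \<le> u" and v: "0 \<le> v" and A: "0 < A" and B: "0 < B"
  shows "(u + v) powr q \<le> ((A+B) powr q * (A/(A+B)) / A powr q) * u powr q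
                         + ((A+B) powr q * (B/(A+B)) / B powr q) * v powr q"
proof -
  define s where "s = A / (A+B)"
  define x where "x = u / A"
  define y where "y = v / B"
  have s0: "0 < s" "s < 1" using A B by (auto simp: s_def field_simps)
  have x0: "0 \<le> x" and y0: "0 \<le> y" using u v A B by (auto simp: x_def y_def)
  have key: "(s * x + (1 - s) * y) powr q \<le> s * x powr q + (1 - s) * y powr q"
  proof (cases "x = 0 \<or> y = 0")
    case True
    then show ?thesis
    proof
      assume "x = 0"
      have "((1 - s) * y) powr q = (1 - s) powr q * y powr q" using s0 y0 by (simp add: powr_mult)
      also have "\<dots> \<le> (1 - s) powr 1 * y powr q"
        using s0 q by (intro mult_right_mono powr_mono') auto
      finally show ?thesis using \<open>x = 0\<close> s0 by simp
    next
      assume "y = 0"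
      have "(s * x) powr q = s powr q * x powr q" using s0 x0 by (simp add: powr_mult)
      also have "\<dots> \<le> s powr 1 * x powr q"
        using s0 q by (intro mult_right_mono powr_mono') auto
      finally show ?thesis using \<open>y = 0\<close> s0 by simp
    qed
  next
    case False
    then have "0 < x" "0 < y" using x0 y0 by auto
    have c: "convex_on {0<..} (\<lambda>x. x powr q)" using powr_convex[OF q] .
    have "((1 - (1 - s)) *\<^sub>R x + (1 - s) *\<^sub>R y) powr q \<le> (1 - (1 - s)) * x powr q + (1 - s) * y powr q"
      by (rule convex_onD[OF c]) (use s0 \<open>0 < x\<close> \<open>0 < y\<close> in auto)
    then show ?thesis by simp
  qed
  have ne0: "A + B \<noteq> 0" using A B by simp
  have e1: "s * x = u / (A+B)" using A by (simp add: s_def x_def)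
  have e0: "1 - s = B / (A+B)" using ne0 unfolding s_def by (simp add: field_simps)
  have e2: "(1 - s) * y = v / (A+B)" using B by (simp add: e0 y_def)
  have eq: "(u + v) / (A + B) = s * x + (1 - s) * y"
    by (simp add: e1 e2 add_divide_distrib)
  have ne: "A + B \<noteq> 0" using A B by simp
  have "(u + v) powr q = ((A + B) * ((u + v) / (A + B))) powr q" by (simp add: ne)
  also have "\<dots> = (A + B) powr q * ((u + v) / (A + B)) powr q"
    by (rule powr_mult)
  also have "\<dots> \<le> (A + B) powr q * (s * x powr q + (1 - s) * y powr q)"
    unfolding eq by (rule mult_left_mono[OF key]) simp
  also have "\<dots> = ((A+B) powr q * (A/(A+B)) / A powr q) * u powr q
                         + ((A+B) powr q * (B/(A+B)) / B powr q) * v powr q"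
    unfolding e0 using A B u v by (simp add: s_def x_def y_def powr_divide algebra_simps)
  finally show ?thesis .
qed

context fs_setting begin

lemma int_pow_nonneg: "0 \<le> integral\<^sup>L M (\<lambda>t. \<bar>f t\<bar> powr q)"
  by (intro integral_nonneg_AE) auto

lemma nrm_pow: "p \<noteq> \<infinity> \<Longrightarrow> nrm f powr q = integral\<^sup>L M (\<lambda>t. \<bar>f t\<bar> powr q)"
  using q1[of] int_pow_nonneg[of f]
  by (simp add: nrm_fin powr_powr)

lemma nrm_zero_AE:
  assumes "p \<noteq> \<infinity>" "Lp f" "nrm f = 0"
  shows "AE t in M. f t = 0"
proof -
  have i: "integrable M (\<lambda>t. \<bar>f t\<bar> powr q)" using assms Lp_fin by blast
  have "integral\<^sup>L M (\<lambda>t. \<bar>f t\<bar> powr q) = 0"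
    using nrm_pow[OF assms(1), of f] assms(3) q1[OF assms(1)] by simp
  then have "AE t in M. \<bar>f t\<bar> powr q = 0"
    using integral_nonneg_eq_0_iff_AE[OF i] by simp
  then show ?thesis by (auto elim!: eventually_mono)
qed

lemma Lp_add:
  assumes f: "Lp f" and g: "Lp g"
  shows "Lp (\<lambda>t. f t + g t)" "nrm (\<lambda>t. f t + g t) \<le> nrm f + nrm g"
proof -
  have mfg: "(\<lambda>t. f t + g t) \<in> borel_measurable M" using Lp_meas[OF f] Lp_meas[OF g] by measurable
  have "Lp (\<lambda>t. f t + g t) \<and> nrm (\<lambda>t. f t + g t) \<le> nrm f + nrm g"
  proof (cases "p = \<infinity>")
    case True
    note bf = Linf_bound[OF True f] and bg = Linf_bound[OF True g]
    have "AE t in M. \<bar>f t + g t\<bar> \<le> nrm f + nrm g" using bf(1) bg(1)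
      by eventually_elim auto
    moreover have C0: "0 \<le> nrm f + nrm g" using bf(2) bg(2) by simp
    ultimately show ?thesis using Linf_intro[OF True mfg C0] by blast
  next
    case False
    note fin = Lp_fin[OF False]
    have q: "1 \<le> q" using q1[OF False] .
    have A0: "0 \<le> nrm f" and B0: "0 \<le> nrm g" using nrm_nonneg f g by auto
    show ?thesis
    proof (cases "nrm f = 0 \<or> nrm g = 0")
      case True
      then show ?thesis
      proof
        assume z: "nrm f = 0"
        have "AE t in M. \<bar>f t + g t\<bar> \<le> \<bar>g t\<bar>" using nrm_zero_AE[OF False f z]
          by (auto elim!: eventually_mono)
        then show ?thesis using Lp_mono_AE[OF mfg g] z by auto
      next
        assume z: "nrm g = 0"
        have "AE t in M. \<bar>f t + g t\<bar> \<le> \<bar>f t\<bar>" using nrm_zero_AE[OF False g z]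
          by (auto elim!: eventually_mono)
        then show ?thesis using Lp_mono_AE[OF mfg f] z by auto
      qed
    next
      case False
      define A where "A = nrm f"
      define B where "B = nrm g"
      have A: "0 < A" and B: "0 < B" using A0 B0 False by (auto simp: A_def B_def)
      define c1 where "c1 = (A+B) powr q * (A/(A+B)) / A powr q"
      define c2 where "c2 = (A+B) powr q * (B/(A+B)) / B powr q"
      have ifg: "integrable M (\<lambda>t. \<bar>f t\<bar> powr q)" "integrable M (\<lambda>t. \<bar>g t\<bar> powr q)"
        using f g fin by auto
      have iD: "integrable M (\<lambda>t. c1 * \<bar>f t\<bar> powr q + c2 * \<bar>g t\<bar> powr q)"
        using ifg by auto
      have pt: "\<bar>f t + g t\<bar> powr q \<le> c1 * \<bar>f t\<bar> powr q + c2 * \<bar>g t\<bar> powr q" for t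
      proof -
        have "\<bar>f t + g t\<bar> powr q \<le> (\<bar>f t\<bar> + \<bar>g t\<bar>) powr q"
          using q by (intro powr_mono2) auto
        also have "\<dots> \<le> c1 * \<bar>f t\<bar> powr q + c2 * \<bar>g t\<bar> powr q"
          unfolding c1_def c2_def by (rule convex_pt[OF q _ _ A B]) auto
        finally show ?thesis .
      qed
      have m2: "(\<lambda>t. \<bar>f t + g t\<bar> powr q) \<in> borel_measurable M" using mfg by measurable
      have ae2: "AE t in M. norm (\<bar>f t + g t\<bar> powr q) \<le> norm (c1 * \<bar>f t\<bar> powr q + c2 * \<bar>g t\<bar> powr q)"
      proof (intro AE_I2)
        fix t
        have "0 \<le> \<bar>f t + g t\<bar> powr q" by simp
        then show "norm (\<bar>f t + g t\<bar> powr q) \<le> norm (c1 * \<bar>f t\<bar> powr q + c2 * \<bar>g t\<bar> powr q)"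
          using pt[of t] by simp
      qed
      have ifg2: "integrable M (\<lambda>t. \<bar>f t + g t\<bar> powr q)"
        by (rule Bochner_Integration.integrable_bound[OF iD m2 ae2])
      have "integral\<^sup>L M (\<lambda>t. \<bar>f t + g t\<bar> powr q) \<le> integral\<^sup>L M (\<lambda>t. c1 * \<bar>f t\<bar> powr q + c2 * \<bar>g t\<bar> powr q)"
        by (rule integral_mono[OF ifg2 iD pt])
      also have "\<dots> = c1 * integral\<^sup>L M (\<lambda>t. \<bar>f t\<bar> powr q) + c2 * integral\<^sup>L M (\<lambda>t. \<bar>g t\<bar> powr q)"
        using ifg by simp
      also have "\<dots> = c1 * A powr q + c2 * B powr q"
        using nrm_pow[OF \<open>p \<noteq> \<infinity>\<close>] by (simp add: A_def B_def)
      also have "\<dots> = (A + B) powr q * (A/(A+B)) + (A + B) powr q * (B/(A+B))"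
        using A B by (simp add: c1_def c2_def)
      also have "\<dots> = (A + B) powr q"
        using A B by (simp add: distrib_left[symmetric] add_divide_distrib[symmetric])
      finally have le: "integral\<^sup>L M (\<lambda>t. \<bar>f t + g t\<bar> powr q) \<le> (A + B) powr q" .
      have "nrm (\<lambda>t. f t + g t) \<le> ((A + B) powr q) powr (1 / q)"
        unfolding nrm_fin[OF \<open>p \<noteq> \<infinity>\<close>]
        by (rule powr_mono2[OF _ _ le]) (use q in \<open>auto intro!: integral_nonneg_AE\<close>)
      also have "\<dots> = A + B" using A B q by (simp add: powr_powr)
      finally have nle: "nrm (\<lambda>t. f t + g t) \<le> A + B" .
      have "Lp (\<lambda>t. f t + g t)" using fin[of "\<lambda>t. f t + g t"] ifg2 mfg by blast
      then show ?thesis using nle unfolding A_def B_def by blast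
    qed
  qed
  then show "Lp (\<lambda>t. f t + g t)" "nrm (\<lambda>t. f t + g t) \<le> nrm f + nrm g" by blast+
qed

lemma Lp_diff:
  assumes f: "Lp f" and g: "Lp g"
  shows "Lp (\<lambda>t. f t - g t)" "nrm (\<lambda>t. f t - g t) \<le> nrm f + nrm g"
  using Lp_add[OF f Lp_uminus[OF g]] by (simp_all only: diff_conv_add_uminus nrm_uminus)

lemma Lp_sum:
  assumes "\<And>m. m \<in> S \<Longrightarrow> Lp (f m)" "finite S"
  shows "Lp (\<lambda>t. \<Sum>m\<in>S. c m * f m t)"
  using assms(2,1)
proof (induction S rule: finite_induct)
  case empty then show ?case using Lp_zero by simp
next
  case (insert x F)
  then show ?case using Lp_add(1)[OF Lp_cmult[of "f x" "c x"], of "\<lambda>t. \<Sum>m\<in>F. c m * f m t"]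
    by simp
qed

end

context fs_setting begin

definition Aop :: "(real \<Rightarrow> real) \<Rightarrow> real \<Rightarrow> real" where
  "Aop g t = (\<Sum>n\<in>{1..N}. if t \<in> Isub xs n then \<alpha> n (Linv xs N n t) * g (Linv xs N n t) else 0)"

lemma Top_eq: "Top xs N \<alpha> f (\<lambda>_. 0) g t = f t + Aop g t"
  unfolding Top_def Aop_def by (intro arg_cong2[where f="(+)"] refl sum.cong) auto

lemma dpos: "n \<in> {1..N} \<Longrightarrow> xs (n - 1) < xs n"
  using xs_less[of "n - 1" n] by auto

lemma Isub_int: "n \<in> {1..N} \<Longrightarrow> t \<in> Isub xs n \<Longrightarrow> xs (n - 1) \<le> t \<and> t \<le> xs n"
  by (cases "n = 1") (auto simp: Isub_def)

lemma Linv_in: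
  assumes n: "n \<in> {1..N}" and t: "t \<in> Isub xs n"
  shows "Linv xs N n t \<in> I"
proof -
  define d where "d = xs n - xs (n - 1)"
  define D where "D = xs N - xs 0"
  have d: "0 < d" using dpos[OF n] by (simp add: d_def)
  have D: "0 < D" using ab by (simp add: D_def)
  have u: "0 \<le> t - xs (n - 1)" "t - xs (n - 1) \<le> d" using Isub_int[OF n t] by (auto simp: d_def)
  have "0 \<le> D / d * (t - xs (n - 1))" using d D u by simp
  moreover have "D / d * (t - xs (n - 1)) \<le> D / d * d"
    using d D u by (intro mult_left_mono) auto
  then have "D / d * (t - xs (n - 1)) \<le> D" using d by simp
  ultimately have "xs 0 \<le> xs 0 + D / d * (t - xs (n - 1))" "xs 0 + D / d * (t - xs (n - 1)) \<le> xs N"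
    by (auto simp: D_def)
  moreover have L: "Linv xs N n t = xs 0 + D / d * (t - xs (n - 1))" by (simp add: Linv_def D_def d_def)
  ultimately show ?thesis unfolding L Ivl_def by simp
qed

lemma Isub_I:
  assumes n: "n \<in> {1..N}" and t: "t \<in> Isub xs n" shows "t \<in> I"
proof -
  have "xs 0 \<le> xs (n - 1)" using n by (intro xs_le) auto
  moreover have "xs n \<le> xs N" using n by (intro xs_le) auto
  ultimately show ?thesis using Isub_int[OF n t] by (auto simp: Ivl_def)
qed

lemma Isub_disj:
  assumes n: "n \<in> {1..N}" and m: "m \<in> {1..N}" and tn: "t \<in> Isub xs n" and tm: "t \<in> Isub xs m"
  shows "n = m"
proof (rule ccontr)
  assume ne: "n \<noteq> m"
  have *: False if a: "a \<in> {1..N}" "b \<in> {1..N}" "a < b" "t \<in> Isub xs a" "t \<in> Isub xs b" for a b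
  proof -
    have "t \<le> xs a" using Isub_int[OF a(1) a(4)] by simp
    also have "xs a \<le> xs (b - 1)" using a by (intro xs_le) auto
    also have "xs (b - 1) < t" using a(5) a(3) a(1) by (auto simp: Isub_def)
    finally show False by simp
  qed
  show False using ne *[OF n m _ tn tm] *[OF m n _ tm tn] by linarith
qed

lemma sum_Isub:
  fixes \<phi> :: "nat \<Rightarrow> 'a::comm_monoid_add"
  assumes n0: "n0 \<in> {1..N}" and t: "t \<in> Isub xs n0"
  shows "(\<Sum>n\<in>{1..N}. if t \<in> Isub xs n then \<phi> n else 0) = \<phi> n0"
proof -
  have "(\<Sum>n\<in>{1..N}. if t \<in> Isub xs n then \<phi> n else 0)
      = (if t \<in> Isub xs n0 then \<phi> n0 else 0) + (\<Sum>n\<in>{1..N} - {n0}. if t \<in> Isub xs n then \<phi> n else 0)"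
    using n0 by (subst sum.remove) auto
  also have "(\<Sum>n\<in>{1..N} - {n0}. if t \<in> Isub xs n then \<phi> n else 0) = 0"
    using Isub_disj[OF _ n0 _ t] by (intro sum.neutral) auto
  finally show ?thesis using t by simp
qed

lemma sum_Isub_none:
  fixes \<phi> :: "nat \<Rightarrow> 'a::comm_monoid_add"
  assumes "\<forall>n\<in>{1..N}. t \<notin> Isub xs n"
  shows "(\<Sum>n\<in>{1..N}. if t \<in> Isub xs n then \<phi> n else 0) = 0"
  using assms by (intro sum.neutral) auto

lemma Aop_in: "n0 \<in> {1..N} \<Longrightarrow> t \<in> Isub xs n0 \<Longrightarrow> Aop g t = \<alpha> n0 (Linv xs N n0 t) * g (Linv xs N n0 t)"
  unfolding Aop_def by (rule sum_Isub)

lemma Aop_out: "\<forall>n\<in>{1..N}. t \<notin> Isub xs n \<Longrightarrow> Aop g t = 0"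
  unfolding Aop_def by (rule sum_Isub_none)

lemma Aop_cases:
  obtains n0 where "n0 \<in> {1..N}" "t \<in> Isub xs n0" "\<And>g. Aop g t = \<alpha> n0 (Linv xs N n0 t) * g (Linv xs N n0 t)"
  | "\<forall>n\<in>{1..N}. t \<notin> Isub xs n" "\<And>g. Aop g t = 0"
  using Aop_in Aop_out by blast

lemma Aop_diff: "Aop (\<lambda>t. f t - g t) t = Aop f t - Aop g t"
  by (cases t rule: Aop_cases) (auto simp: algebra_simps)

lemma Aop_lin: "Aop (\<lambda>t. \<Sum>m\<in>S. c m * f m t) t = (\<Sum>m\<in>S. c m * Aop (f m) t)"
  by (cases t rule: Aop_cases) (auto simp: sum_distrib_left algebra_simps)

lemma Aop_uminus: "Aop (\<lambda>t. - f t) t = - Aop f t"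
  by (cases t rule: Aop_cases) auto

lemma aff_aux: "(a::real) + k * (t - x) = (a - k * x) + k * t"
  by (simp add: algebra_simps)

lemma Linv_affine:
  "Linv xs N n t = (xs 0 - (xs N - xs 0) / (xs n - xs (n - 1)) * xs (n - 1)) + (xs N - xs 0) / (xs n - xs (n - 1)) * t"
  unfolding Linv_def by (rule aff_aux)

lemma cpos: "n \<in> {1..N} \<Longrightarrow> 0 < (xs N - xs 0) / (xs n - xs (n - 1))"
  using dpos ab by simp

lemma ext_meas:
  fixes h :: "real \<Rightarrow> real"
  assumes "h \<in> borel_measurable M"
  shows "(\<lambda>s. indicator I s * h s) \<in> borel_measurable lebesgue"
  using assms borel_measurable_restrict_space_iff[of I lebesgue h] by simp

lemma comp_meas:
  fixes h :: "real \<Rightarrow> real"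
  assumes h: "h \<in> borel_measurable M" and n: "n \<in> {1..N}"
  shows "(\<lambda>t. if t \<in> Isub xs n then h (Linv xs N n t) else 0) \<in> borel_measurable lebesgue"
proof -
  define c where "c = (xs N - xs 0) / (xs n - xs (n - 1))"
  define t0 where "t0 = xs 0 - c * xs (n - 1)"
  have c: "c \<noteq> 0" using cpos[OF n] unfolding c_def[symmetric] by simp
  have L: "Linv xs N n t = t0 + c * t" for t by (simp add: Linv_affine c_def t0_def)
  define he where "he = (\<lambda>s. indicator I s * h s)"
  have he: "he \<in> borel_measurable lebesgue" unfolding he_def by (rule ext_meas[OF h])
  have m1: "(\<lambda>t. he (t0 + c *\<^sub>R t)) \<in> borel_measurable lebesgue"
    by (rule borel_measurable_affine[OF he c])
  have Is: "Isub xs n \<in> sets lebesgue" by (simp add: Isub_def)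
  have m2: "(\<lambda>t. indicator (Isub xs n) t * he (t0 + c * t)) \<in> borel_measurable lebesgue"
    using m1 Is by simp
  have eq: "(\<lambda>t. if t \<in> Isub xs n then h (Linv xs N n t) else 0) = (\<lambda>t. indicator (Isub xs n) t * he (t0 + c * t))"
    using Linv_in[OF n] by (auto simp: he_def L[symmetric] indicator_def)
  show ?thesis unfolding eq by (rule m2)
qed

lemma Aop_meas_leb:
  assumes g: "g \<in> borel_measurable M"
  shows "Aop g \<in> borel_measurable lebesgue"
proof -
  have "(\<lambda>t. if t \<in> Isub xs n then \<alpha> n (Linv xs N n t) * g (Linv xs N n t) else 0) \<in> borel_measurable lebesgue"
    if n: "n \<in> {1..N}" for n
  proof -
    have "(\<lambda>s. \<alpha> n s * g s) \<in> borel_measurable M" using \<alpha>m[OF n] g by measurable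
    from comp_meas[OF this n] show ?thesis .
  qed
  then show ?thesis unfolding Aop_def[abs_def] by (intro borel_measurable_sum) auto
qed

lemma Aop_meas: "g \<in> borel_measurable M \<Longrightarrow> Aop g \<in> borel_measurable M"
  using Aop_meas_leb by (rule measurable_restrict_space1)

lemma AE_affine:
  fixes c t0 :: real
  assumes c: "c \<noteq> 0" and ae: "AE s in lebesgue. P s"
  shows "AE t in lebesgue. P (t0 + c * t)"
proof -
  obtain Z where Z0: "{s \<in> space lebesgue. \<not> P s} \<subseteq> Z" "emeasure lebesgue Z = 0" "Z \<in> sets lebesgue"
    using ae by (rule AE_E)
  have Z: "Z \<in> null_sets lebesgue" "{s \<in> space lebesgue. \<not> P s} \<subseteq> Z" using Z0 by auto
  have Zs: "Z \<in> sets lebesgue" using Z0 by auto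
  have mi: "indicator Z \<in> borel_measurable lebesgue" using Zs by simp
  have mi2: "(\<lambda>t. indicator Z (t0 + c *\<^sub>R t) :: real) \<in> borel_measurable lebesgue"
    by (rule borel_measurable_affine[OF mi c])
  define Z' where "Z' = {t. t0 + c * t \<in> Z}"
  have ind: "indicator Z' t = (indicator Z (t0 + c * t) :: real)" for t
    by (simp add: Z'_def indicator_def)
  have Z's: "Z' \<in> sets lebesgue"
    using mi2 by (simp add: ind[symmetric] borel_measurable_indicator_iff Z'_def)
  have mZ: "(\<lambda>x. indicator Z x :: ennreal) \<in> borel_measurable lebesgue" using Zs by simp
  have "emeasure lebesgue Z = (\<integral>\<^sup>+x. indicator Z x \<partial>lebesgue)" using Zs by simp
  also have "\<dots> = ennreal \<bar>c\<bar> * (\<integral>\<^sup>+x. indicator Z (t0 + c * x) \<partial>lebesgue)"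
    by (rule nn_integral_real_affine_lebesgue[OF mZ c])
  also have "(\<integral>\<^sup>+x. indicator Z (t0 + c * x) \<partial>lebesgue) = (\<integral>\<^sup>+x. indicator Z' x \<partial>lebesgue)"
    by (simp add: Z'_def indicator_def)
  also have "\<dots> = emeasure lebesgue Z'" using Z's by simp
  finally have "ennreal \<bar>c\<bar> * emeasure lebesgue Z' = 0" using Z by auto
  then have "emeasure lebesgue Z' = 0" using c by simp
  then have "Z' \<in> null_sets lebesgue" using Z's by auto
  moreover have "{t \<in> space lebesgue. \<not> P (t0 + c * t)} \<subseteq> Z'" using Z by (auto simp: Z'_def)
  ultimately show ?thesis by (auto intro: AE_I')
qed

lemma half_ereal: "(1/2::ereal) = ereal (1/2)"
  by (simp add: ereal_divide[symmetric] one_ereal_def)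

lemma alpha_bound: "AE s in M. \<forall>n\<in>{1..N}. \<bar>\<alpha> n s\<bar> \<le> 1/2"
proof -
  have "AE s in M. Max ((\<lambda>n. ereal \<bar>\<alpha> n s\<bar>) ` {1..N}) \<le> Lambda xs N \<alpha>"
    unfolding Lambda_def by (rule esssup_AE)
  then show ?thesis
  proof (rule eventually_mono, intro ballI)
    fix s n assume le: "Max ((\<lambda>n. ereal \<bar>\<alpha> n s\<bar>) ` {1..N}) \<le> Lambda xs N \<alpha>" and n: "n \<in> {1..N}"
    have "ereal \<bar>\<alpha> n s\<bar> \<le> Max ((\<lambda>n. ereal \<bar>\<alpha> n s\<bar>) ` {1..N})"
      using n by (intro Max_ge) auto
    also note le
    also note Lam
    finally have "ereal \<bar>\<alpha> n s\<bar> < 1/2" .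
    then have "ereal \<bar>\<alpha> n s\<bar> < ereal (1/2)" by (simp only: half_ereal)
    then show "\<bar>\<alpha> n s\<bar> \<le> 1/2" by simp
  qed
qed

end

context fs_setting begin

lemma Aop_inf:
  assumes pinf: "p = \<infinity>" and g: "Lp g"
  shows "Lp (Aop g)" "nrm (Aop g) \<le> 1/2 * nrm g"
proof -
  define G where "G = nrm g"
  note gb = Linf_bound[OF pinf g]
  have G0: "0 \<le> G" using gb(2) by (simp add: G_def)
  define P where "P = (\<lambda>s. (\<forall>n\<in>{1..N}. \<bar>\<alpha> n s\<bar> \<le> 1/2) \<and> \<bar>g s\<bar> \<le> G)"
  have aeM: "AE s in M. P s" using alpha_bound gb(1) unfolding P_def G_def by eventually_elim auto
  have aeL: "AE s in lebesgue. s \<in> I \<longrightarrow> P s"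
    using aeM by (subst (asm) AE_restrict_space_iff) auto
  have each: "AE t in lebesgue. Linv xs N n t \<in> I \<longrightarrow> P (Linv xs N n t)" if n: "n \<in> {1..N}" for n
  proof -
    define c where "c = (xs N - xs 0) / (xs n - xs (n - 1))"
    define t0 where "t0 = xs 0 - c * xs (n - 1)"
    have c: "c \<noteq> 0" using cpos[OF n] unfolding c_def[symmetric] by simp
    have L: "Linv xs N n t = t0 + c * t" for t by (simp add: Linv_affine c_def t0_def)
    show ?thesis unfolding L by (rule AE_affine[OF c aeL])
  qed
  have all: "AE t in lebesgue. \<forall>n\<in>{1..N}. Linv xs N n t \<in> I \<longrightarrow> P (Linv xs N n t)"
    using each by (intro eventually_ball_finite) auto
  have "AE t in M. \<forall>n\<in>{1..N}. Linv xs N n t \<in> I \<longrightarrow> P (Linv xs N n t)"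
    using all by (subst AE_restrict_space_iff) (auto elim!: eventually_mono)
  then have ae: "AE t in M. \<bar>Aop g t\<bar> \<le> 1/2 * G"
  proof (rule eventually_mono)
    fix t assume H: "\<forall>n\<in>{1..N}. Linv xs N n t \<in> I \<longrightarrow> P (Linv xs N n t)"
    show "\<bar>Aop g t\<bar> \<le> 1/2 * G"
    proof (cases t rule: Aop_cases)
      case (1 n0)
      have LI: "Linv xs N n0 t \<in> I" by (rule Linv_in[OF 1(1,2)])
      have "P (Linv xs N n0 t)" using H 1(1) LI by blast
      then have a: "\<bar>\<alpha> n0 (Linv xs N n0 t)\<bar> \<le> 1/2" and b: "\<bar>g (Linv xs N n0 t)\<bar> \<le> G"
        unfolding P_def using 1(1) by auto
      have "\<bar>Aop g t\<bar> = \<bar>\<alpha> n0 (Linv xs N n0 t)\<bar> * \<bar>g (Linv xs N n0 t)\<bar>"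
        using 1(3) by (simp add: abs_mult)
      also have "\<dots> \<le> 1/2 * G" using a b G0 by (intro mult_mono) auto
      finally show ?thesis .
    next
      case 2
      then show ?thesis using G0 by simp
    qed
  qed
  have m: "Aop g \<in> borel_measurable M" using Aop_meas[OF Lp_meas[OF g]] .
  have G2: "0 \<le> 1/2 * G" using G0 by simp
  show "Lp (Aop g)" "nrm (Aop g) \<le> 1/2 * nrm g"
    using Linf_intro[OF pinf m G2 ae] by (auto simp: G_def)
qed

lemma tele: "K \<le> N \<Longrightarrow> (\<Sum>n\<in>{1..K}. xs n - xs (n - 1)) = xs K - xs 0"
  by (induction K) auto

lemma sum_inv_c: "(\<Sum>n\<in>{1..N}. (xs n - xs (n - 1)) / (xs N - xs 0)) = 1"
  using ab tele[of N] by (simp add: sum_divide_distrib[symmetric])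

lemma Aop_fin:
  assumes pf: "p \<noteq> \<infinity>" and g: "Lp g"
  shows "Lp (Aop g)" "nrm (Aop g) \<le> 1/2 * nrm g"
proof -
  have q: "1 \<le> q" using q1[OF pf] .
  have gm: "g \<in> borel_measurable M" using Lp_meas[OF g] .
  have ig: "integrable M (\<lambda>t. \<bar>g t\<bar> powr q)" using g Lp_fin[OF pf] by blast
  define J where "J = integral\<^sup>L M (\<lambda>t. \<bar>g t\<bar> powr q)"
  have J0: "0 \<le> J" unfolding J_def by (rule int_pow_nonneg)
  define ge where "ge = (\<lambda>s. indicator I s * g s)"
  have gem: "ge \<in> borel_measurable lebesgue" unfolding ge_def by (rule ext_meas[OF gm])
  have intge: "(\<integral>\<^sup>+s. ennreal (\<bar>ge s\<bar> powr q) \<partial>lebesgue) = ennreal J"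
  proof -
    have "(\<integral>\<^sup>+s. ennreal (\<bar>ge s\<bar> powr q) \<partial>lebesgue) = (\<integral>\<^sup>+s. ennreal (\<bar>g s\<bar> powr q) * indicator I s \<partial>lebesgue)"
      by (intro nn_integral_cong) (auto simp: ge_def indicator_def)
    also have "\<dots> = (\<integral>\<^sup>+s. ennreal (\<bar>g s\<bar> powr q) \<partial>M)"
      by (subst nn_integral_restrict_space) auto
    also have "\<dots> = ennreal J" unfolding J_def
      by (rule nn_integral_eq_integral[OF ig]) auto
    finally show ?thesis .
  qed
  define \<Phi> where "\<Phi> = (\<lambda>n t. if t \<in> Isub xs n then ennreal ((\<bar>\<alpha> n (Linv xs N n t)\<bar> * \<bar>g (Linv xs N n t)\<bar>) powr q) else 0)"
  have \<Phi>m: "\<Phi> n \<in> borel_measurable lebesgue" if n: "n \<in> {1..N}" for n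
  proof -
    have "(\<lambda>s. (\<bar>\<alpha> n s\<bar> * \<bar>g s\<bar>) powr q) \<in> borel_measurable M" using \<alpha>m[OF n] gm by measurable
    from comp_meas[OF this n]
    have "(\<lambda>t. ennreal (if t \<in> Isub xs n then (\<bar>\<alpha> n (Linv xs N n t)\<bar> * \<bar>g (Linv xs N n t)\<bar>) powr q else 0)) \<in> borel_measurable lebesgue"
      by measurable
    moreover have "(\<lambda>t. ennreal (if t \<in> Isub xs n then (\<bar>\<alpha> n (Linv xs N n t)\<bar> * \<bar>g (Linv xs N n t)\<bar>) powr q else 0)) = \<Phi> n"
      by (auto simp: \<Phi>_def fun_eq_iff)
    ultimately show ?thesis by simp
  qed
  have pt: "ennreal (\<bar>Aop g t\<bar> powr q) = (\<Sum>n\<in>{1..N}. \<Phi> n t)" for t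
  proof (cases t rule: Aop_cases)
    case (1 n0)
    have "(\<Sum>n\<in>{1..N}. \<Phi> n t) = ennreal ((\<bar>\<alpha> n0 (Linv xs N n0 t)\<bar> * \<bar>g (Linv xs N n0 t)\<bar>) powr q)"
      unfolding \<Phi>_def by (rule sum_Isub[OF 1(1,2)])
    then show ?thesis using 1(3) by (simp add: abs_mult)
  next
    case 2
    have "(\<Sum>n\<in>{1..N}. \<Phi> n t) = 0"
      unfolding \<Phi>_def by (rule sum_Isub_none[OF 2(1)])
    then show ?thesis using 2(2) by simp
  qed
  have aeL: "AE s in lebesgue. s \<in> I \<longrightarrow> (\<forall>n\<in>{1..N}. \<bar>\<alpha> n s\<bar> \<le> 1/2)"
    using alpha_bound by (subst (asm) AE_restrict_space_iff) auto
  define K where "K = (1/2) powr q * J"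
  have K0: "0 \<le> K" using J0 by (simp add: K_def)
  have bnd: "(\<integral>\<^sup>+t. \<Phi> n t \<partial>lebesgue) \<le> ennreal ((xs n - xs (n - 1)) / (xs N - xs 0) * K)"
    if n: "n \<in> {1..N}" for n
  proof -
    define c where "c = (xs N - xs 0) / (xs n - xs (n - 1))"
    define t0 where "t0 = xs 0 - c * xs (n - 1)"
    have cp: "0 < c" using cpos[OF n] unfolding c_def[symmetric] .
    then have c: "c \<noteq> 0" by simp
    have L: "Linv xs N n t = t0 + c * t" for t by (simp add: Linv_affine c_def t0_def)
    define ae where "ae = (\<lambda>s. indicator I s * \<alpha> n s)"
    have aem: "ae \<in> borel_measurable lebesgue" unfolding ae_def by (rule ext_meas[OF \<alpha>m[OF n]])
    define \<psi> where "\<psi> = (\<lambda>s. ennreal ((\<bar>ae s\<bar> * \<bar>ge s\<bar>) powr q))"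
    have \<psi>m: "\<psi> \<in> borel_measurable lebesgue" unfolding \<psi>_def using aem gem by measurable
    have le1: "\<Phi> n t \<le> \<psi> (t0 + c * t)" for t
    proof (cases "t \<in> Isub xs n")
      case True
      have "Linv xs N n t \<in> I" by (rule Linv_in[OF n True])
      then show ?thesis using True by (simp add: \<Phi>_def \<psi>_def ae_def ge_def L)
    qed (simp add: \<Phi>_def)
    have "(\<integral>\<^sup>+t. \<Phi> n t \<partial>lebesgue) \<le> (\<integral>\<^sup>+t. \<psi> (t0 + c * t) \<partial>lebesgue)"
      by (intro nn_integral_mono le1)
    also have "(\<integral>\<^sup>+t. \<psi> (t0 + c * t) \<partial>lebesgue) = ennreal (1/c) * (\<integral>\<^sup>+s. \<psi> s \<partial>lebesgue)"
    proof -
      have e: "(\<integral>\<^sup>+s. \<psi> s \<partial>lebesgue) = ennreal \<bar>c\<bar> * (\<integral>\<^sup>+t. \<psi> (t0 + c * t) \<partial>lebesgue)"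
        by (rule nn_integral_real_affine_lebesgue[OF \<psi>m c])
      have "ennreal (1/c) * ennreal \<bar>c\<bar> = 1" using cp by (simp add: ennreal_mult[symmetric])
      then show ?thesis unfolding e by (simp add: mult.assoc[symmetric])
    qed
    also have "(\<integral>\<^sup>+s. \<psi> s \<partial>lebesgue) \<le> (\<integral>\<^sup>+s. ennreal ((1/2) powr q) * ennreal (\<bar>ge s\<bar> powr q) \<partial>lebesgue)"
    proof (rule nn_integral_mono_AE)
      show "AE s in lebesgue. \<psi> s \<le> ennreal ((1/2) powr q) * ennreal (\<bar>ge s\<bar> powr q)"
        using aeL
      proof (rule eventually_mono)
        fix s assume H: "s \<in> I \<longrightarrow> (\<forall>n\<in>{1..N}. \<bar>\<alpha> n s\<bar> \<le> 1/2)"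
        have a: "\<bar>ae s\<bar> \<le> 1/2" using H n by (cases "s \<in> I") (auto simp: ae_def)
        have "(\<bar>ae s\<bar> * \<bar>ge s\<bar>) powr q \<le> (1/2 * \<bar>ge s\<bar>) powr q"
          using a q by (intro powr_mono2 mult_right_mono) auto
        also have "\<dots> = (1/2) powr q * \<bar>ge s\<bar> powr q" by (rule powr_mult)
        finally show "\<psi> s \<le> ennreal ((1/2) powr q) * ennreal (\<bar>ge s\<bar> powr q)"
          by (simp add: \<psi>_def ennreal_mult[symmetric])
      qed
    qed
    also have "\<dots> = ennreal ((1/2) powr q) * ennreal J"
      using gem by (simp add: nn_integral_cmult intge)
    finally have "(\<integral>\<^sup>+t. \<Phi> n t \<partial>lebesgue) \<le> ennreal (1/c) * (ennreal ((1/2) powr q) * ennreal J)"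
      by (simp add: mult_left_mono)
    also have "\<dots> = ennreal (1/c) * ennreal K"
    proof -
      have "ennreal ((1/2) powr q) * ennreal J = ennreal ((1/2) powr q * J)"
        by (rule ennreal_mult[symmetric]) (use J0 in auto)
      then show ?thesis by (simp only: K_def)
    qed
    also have "\<dots> = ennreal (1/c * K)"
      by (rule ennreal_mult[symmetric]) (use cp K0 in auto)
    also have "1/c * K = (xs n - xs (n - 1)) / (xs N - xs 0) * K"
      by (simp add: c_def)
    finally show ?thesis .
  qed
  have am: "Aop g \<in> borel_measurable M" by (rule Aop_meas[OF gm])
  have "(\<integral>\<^sup>+t. ennreal (\<bar>Aop g t\<bar> powr q) \<partial>M) = (\<integral>\<^sup>+t. ennreal (\<bar>Aop g t\<bar> powr q) * indicator I t \<partial>lebesgue)"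
    by (subst nn_integral_restrict_space) auto
  also have "\<dots> \<le> (\<integral>\<^sup>+t. ennreal (\<bar>Aop g t\<bar> powr q) \<partial>lebesgue)"
    by (intro nn_integral_mono) (auto simp: indicator_def)
  also have "\<dots> = (\<integral>\<^sup>+t. (\<Sum>n\<in>{1..N}. \<Phi> n t) \<partial>lebesgue)"
    by (simp add: pt)
  also have "\<dots> = (\<Sum>n\<in>{1..N}. \<integral>\<^sup>+t. \<Phi> n t \<partial>lebesgue)"
    by (rule nn_integral_sum) (use \<Phi>m in auto)
  also have "\<dots> \<le> (\<Sum>n\<in>{1..N}. ennreal ((xs n - xs (n - 1)) / (xs N - xs 0) * K))"
    by (intro sum_mono bnd)
  also have "\<dots> = ennreal (\<Sum>n\<in>{1..N}. (xs n - xs (n - 1)) / (xs N - xs 0) * K)"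
  proof (intro sum_ennreal)
    fix n assume n: "n \<in> {1..N}"
    have "0 \<le> (xs n - xs (n - 1)) / (xs N - xs 0)" using dpos[OF n] ab by simp
    then show "0 \<le> (xs n - xs (n - 1)) / (xs N - xs 0) * K" using K0 by (rule mult_nonneg_nonneg)
  qed
  also have "(\<Sum>n\<in>{1..N}. (xs n - xs (n - 1)) / (xs N - xs 0) * K) = K"
    unfolding sum_distrib_right[symmetric] sum_inv_c by simp
  finally have X: "(\<integral>\<^sup>+t. ennreal (\<bar>Aop g t\<bar> powr q) \<partial>M) \<le> ennreal K" .
  have ia: "integrable M (\<lambda>t. \<bar>Aop g t\<bar> powr q)"
    unfolding integrable_iff_bounded
  proof
    show "(\<lambda>t. \<bar>Aop g t\<bar> powr q) \<in> borel_measurable M" using am by measurable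
    have "(\<integral>\<^sup>+t. ennreal (norm (\<bar>Aop g t\<bar> powr q)) \<partial>M) = (\<integral>\<^sup>+t. ennreal (\<bar>Aop g t\<bar> powr q) \<partial>M)"
      by simp
    also have "\<dots> < \<infinity>" using X by (simp add: le_less_trans)
    finally show "(\<integral>\<^sup>+t. ennreal (norm (\<bar>Aop g t\<bar> powr q)) \<partial>M) < \<infinity>" .
  qed
  have "ennreal (integral\<^sup>L M (\<lambda>t. \<bar>Aop g t\<bar> powr q)) \<le> ennreal K"
    using X nn_integral_eq_integral[OF ia] by simp
  then have iK: "integral\<^sup>L M (\<lambda>t. \<bar>Aop g t\<bar> powr q) \<le> K" using K0 by simp
  show "Lp (Aop g)" using Lp_fin[OF pf] am ia by blast
  have "nrm (Aop g) \<le> K powr (1 / q)"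
    unfolding nrm_fin[OF pf]
    by (rule powr_mono2[OF _ _ iK]) (use q in \<open>auto intro!: integral_nonneg_AE\<close>)
  also have "K powr (1 / q) = ((1/2) powr q) powr (1/q) * J powr (1/q)"
    unfolding K_def using J0 by (simp add: powr_mult)
  also have "\<dots> = 1/2 * nrm g"
    using q by (simp add: powr_powr nrm_fin[OF pf] J_def)
  finally show "nrm (Aop g) \<le> 1/2 * nrm g" .
qed

lemma Aop_contr:
  assumes "Lp g"
  shows "Lp (Aop g)" "nrm (Aop g) \<le> 1/2 * nrm g"
  using Aop_inf[OF _ assms] Aop_fin[OF _ assms] by (cases "p = \<infinity>"; auto)+

end

context fs_setting begin

lemma Lp_psum:
  fixes h :: "nat \<Rightarrow> real \<Rightarrow> real"
  assumes "\<And>k. Lp (h k)"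
  shows "Lp (\<lambda>t. \<Sum>k<n. \<bar>h k t\<bar>)" "nrm (\<lambda>t. \<Sum>k<n. \<bar>h k t\<bar>) \<le> (\<Sum>k<n. nrm (h k))"
proof -
  have "Lp (\<lambda>t. \<Sum>k<n. \<bar>h k t\<bar>) \<and> nrm (\<lambda>t. \<Sum>k<n. \<bar>h k t\<bar>) \<le> (\<Sum>k<n. nrm (h k))"
  proof (induction n)
    case 0
    have "Lp (\<lambda>t. 0)" by (rule Lp_zero)
    moreover have "nrm (\<lambda>t. 0) \<le> 0"
    proof (cases "p = \<infinity>")
      case True
      show ?thesis by (rule Linf_intro(2)[OF True]) auto
    next
      case False
      show ?thesis unfolding nrm_fin[OF False] by simp
    qed
    ultimately show ?case by simp
  next
    case (Suc n)
    have a: "Lp (\<lambda>t. \<bar>h n t\<bar>)" using Lp_abs[OF assms] .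
    note add = Lp_add[OF conjunct1[OF Suc] a]
    have "nrm (\<lambda>t. (\<Sum>k<n. \<bar>h k t\<bar>) + \<bar>h n t\<bar>) \<le> (\<Sum>k<n. nrm (h k)) + nrm (h n)"
      using add(2) conjunct2[OF Suc] by simp
    then show ?case using add(1) by simp
  qed
  then show "Lp (\<lambda>t. \<Sum>k<n. \<bar>h k t\<bar>)" "nrm (\<lambda>t. \<Sum>k<n. \<bar>h k t\<bar>) \<le> (\<Sum>k<n. nrm (h k))" by auto
qed

lemma series_Lp:
  fixes h :: "nat \<Rightarrow> real \<Rightarrow> real"
  assumes h: "\<And>k. Lp (h k)" and hb: "\<And>k. nrm (h k) \<le> C * (1/2)^k"
  shows "AE t in M. summable (\<lambda>k. \<bar>h k t\<bar>)" "Lp (\<lambda>t. \<Sum>k. \<bar>h k t\<bar>)"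
proof -
  have C0: "0 \<le> C" using hb[of 0] nrm_nonneg[OF h[of 0]] by simp
  have hm: "h k \<in> borel_measurable M" for k using Lp_meas[OF h] .
  have Sm: "(\<lambda>t. \<Sum>k. \<bar>h k t\<bar>) \<in> borel_measurable M" using hm by measurable
  have geo: "summable (\<lambda>k. C * (1/2::real)^k)" by (intro summable_mult summable_geometric) simp
  have psb: "(\<Sum>k<n. nrm (h k)) \<le> 2 * C" for n
  proof -
    have "(\<Sum>k<n. nrm (h k)) \<le> (\<Sum>k<n. C * (1/2)^k)" by (intro sum_mono hb)
    also have "\<dots> \<le> (\<Sum>k. C * (1/2::real)^k)"
      using geo C0 by (intro sum_le_suminf) auto
    also have "\<dots> = 2 * C" using suminf_geometric[of "1/2::real"] by (simp add: suminf_mult)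
    finally show ?thesis .
  qed
  have "(AE t in M. summable (\<lambda>k. \<bar>h k t\<bar>)) \<and> Lp (\<lambda>t. \<Sum>k. \<bar>h k t\<bar>)"
  proof (cases "p = \<infinity>")
    case True
    have "AE t in M. \<forall>k. \<bar>h k t\<bar> \<le> nrm (h k)"
      using Linf_bound(1)[OF True h] by (simp add: AE_all_countable)
    then have ae: "AE t in M. \<forall>k. \<bar>h k t\<bar> \<le> C * (1/2)^k"
    proof (rule eventually_mono)
      fix t assume "\<forall>k. \<bar>h k t\<bar> \<le> nrm (h k)"
      then show "\<forall>k. \<bar>h k t\<bar> \<le> C * (1/2)^k" using hb order_trans by blast
    qed
    have sm: "AE t in M. summable (\<lambda>k. \<bar>h k t\<bar>)"
    proof (rule eventually_mono[OF ae])
      fix t assume H: "\<forall>k. \<bar>h k t\<bar> \<le> C * (1/2)^k"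
      show "summable (\<lambda>k. \<bar>h k t\<bar>)"
        by (rule summable_comparison_test[OF _ geo]) (use H in auto)
    qed
    have "AE t in M. \<bar>\<Sum>k. \<bar>h k t\<bar>\<bar> \<le> 2 * C"
      using ae sm
    proof eventually_elim
      case (elim t)
      have "(\<Sum>k. \<bar>h k t\<bar>) \<le> (\<Sum>k. C * (1/2::real)^k)"
        using elim geo by (intro suminf_le) auto
      also have "\<dots> = 2 * C" using suminf_geometric[of "1/2::real"] by (simp add: suminf_mult)
      finally show ?case using suminf_nonneg[OF elim(2)] by simp
    qed
    moreover have C2: "0 \<le> 2 * C" using C0 by simp
    ultimately have "Lp (\<lambda>t. \<Sum>k. \<bar>h k t\<bar>)" using Linf_intro(1)[OF True Sm C2] by blast
    with sm show ?thesis by simp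
  next
    case False
    have q: "1 \<le> q" using q1[OF False] .
    define S where "S = (\<lambda>n t. \<Sum>k<n. \<bar>h k t\<bar>)"
    have S0: "0 \<le> S n t" for n t by (simp add: S_def sum_nonneg)
    have SLp: "Lp (S n)" for n unfolding S_def by (rule Lp_psum(1)[OF h])
    have Snrm: "nrm (S n) \<le> 2 * C" for n
      using Lp_psum(2)[where h=h and n=n, OF h] psb[of n] unfolding S_def by simp
    define F where "F = (\<lambda>n t. ennreal (\<bar>S n t\<bar> powr q))"
    have Fm: "F n \<in> borel_measurable M" for n
      using Lp_meas[OF SLp[of n]] unfolding F_def by measurable
    have Finc: "incseq (\<lambda>n. F n t)" for t
    proof (rule incseq_SucI)
      fix n
      have "S n t \<le> S (Suc n) t" by (simp add: S_def)
      then show "F n t \<le> F (Suc n) t" unfolding F_def using S0 q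
        by (intro ennreal_leI powr_mono2) auto
    qed
    have intF: "(\<integral>\<^sup>+t. F n t \<partial>M) \<le> ennreal ((2 * C) powr q)" for n
    proof -
      have iS: "integrable M (\<lambda>t. \<bar>S n t\<bar> powr q)" using SLp[of n] Lp_fin[OF False] by blast
      have "(\<integral>\<^sup>+t. F n t \<partial>M) = ennreal (integral\<^sup>L M (\<lambda>t. \<bar>S n t\<bar> powr q))"
        unfolding F_def by (rule nn_integral_eq_integral[OF iS]) auto
      also have "integral\<^sup>L M (\<lambda>t. \<bar>S n t\<bar> powr q) = nrm (S n) powr q"
        using nrm_pow[OF False] by simp
      also have "nrm (S n) powr q \<le> (2 * C) powr q"
        using Snrm[of n] nrm_nonneg[OF SLp[of n]] q by (intro powr_mono2) auto
      finally show ?thesis by (simp add: ennreal_leI)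
    qed
    define Fs where "Fs = (\<lambda>t. SUP n. F n t)"
    have Fsm: "Fs \<in> borel_measurable M" unfolding Fs_def
      by (rule borel_measurable_SUP) (use Fm in auto)
    have "(\<integral>\<^sup>+t. Fs t \<partial>M) = (SUP n. \<integral>\<^sup>+t. F n t \<partial>M)"
      unfolding Fs_def
      by (rule nn_integral_monotone_convergence_SUP) (use Finc Fm in \<open>auto simp: incseq_def le_fun_def\<close>)
    also have "\<dots> \<le> ennreal ((2 * C) powr q)" by (intro SUP_least intF)
    finally have intFs: "(\<integral>\<^sup>+t. Fs t \<partial>M) \<le> ennreal ((2 * C) powr q)" .
    then have "(\<integral>\<^sup>+t. Fs t \<partial>M) \<noteq> \<infinity>" unfolding infinity_ennreal_def by (rule neq_top_trans[OF ennreal_neq_top])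
    from nn_integral_PInf_AE[OF Fsm this]
    have aefin: "AE t in M. Fs t \<noteq> \<infinity>" .
    have key: "summable (\<lambda>k. \<bar>h k t\<bar>) \<and> ennreal (\<bar>\<Sum>k. \<bar>h k t\<bar>\<bar> powr q) \<le> Fs t"
      if fin: "Fs t \<noteq> \<infinity>" for t
    proof -
      obtain b where b: "Fs t = ennreal b" "0 \<le> b" using fin by (cases "Fs t") auto
      have "S n t \<le> b powr (1/q)" for n
      proof -
        have "F n t \<le> Fs t" unfolding Fs_def by (rule SUP_upper) simp
        then have "\<bar>S n t\<bar> powr q \<le> b" using b by (simp add: F_def ennreal_le_iff)
        then have "(\<bar>S n t\<bar> powr q) powr (1/q) \<le> b powr (1/q)"
          using q by (intro powr_mono2) auto
        then show ?thesis using q S0[of n t] by (simp add: powr_powr)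
      qed
      then have bd: "(\<Sum>k<n. \<bar>h k t\<bar>) \<le> b powr (1/q)" for n by (simp add: S_def)
      have sm: "summable (\<lambda>k. \<bar>h k t\<bar>)" by (rule summableI_nonneg_bounded[OF _ bd]) simp
      have le: "(\<Sum>k. \<bar>h k t\<bar>) \<le> b powr (1/q)" by (rule suminf_le_const[OF sm bd])
      have nn: "0 \<le> (\<Sum>k. \<bar>h k t\<bar>)" using suminf_nonneg[OF sm] by simp
      have "\<bar>\<Sum>k. \<bar>h k t\<bar>\<bar> powr q \<le> (b powr (1/q)) powr q"
        using le nn q by (intro powr_mono2) auto
      also have "\<dots> = b" using q b(2) by (simp add: powr_powr)
      finally have "ennreal (\<bar>\<Sum>k. \<bar>h k t\<bar>\<bar> powr q) \<le> Fs t" using b by (simp add: ennreal_leI)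
      with sm show ?thesis by simp
    qed
    have sm: "AE t in M. summable (\<lambda>k. \<bar>h k t\<bar>)" using aefin by eventually_elim (use key in auto)
    have "(\<integral>\<^sup>+t. ennreal (norm (\<bar>\<Sum>k. \<bar>h k t\<bar>\<bar> powr q)) \<partial>M) \<le> (\<integral>\<^sup>+t. Fs t \<partial>M)"
      by (rule nn_integral_mono_AE) (use aefin key in \<open>auto elim!: eventually_mono\<close>)
    also have "\<dots> < \<infinity>" using intFs by (simp add: le_less_trans)
    finally have fi: "(\<integral>\<^sup>+t. ennreal (norm (\<bar>\<Sum>k. \<bar>h k t\<bar>\<bar> powr q)) \<partial>M) < \<infinity>" .
    have Sm2: "(\<lambda>t. \<bar>\<Sum>k. \<bar>h k t\<bar>\<bar> powr q) \<in> borel_measurable M" using Sm by measurable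
    have "integrable M (\<lambda>t. \<bar>\<Sum>k. \<bar>h k t\<bar>\<bar> powr q)"
      unfolding integrable_iff_bounded using Sm2 fi by blast
    then have "Lp (\<lambda>t. \<Sum>k. \<bar>h k t\<bar>)" using Lp_fin[OF False] Sm by blast
    with sm show ?thesis by simp
  qed
  then show "AE t in M. summable (\<lambda>k. \<bar>h k t\<bar>)" "Lp (\<lambda>t. \<Sum>k. \<bar>h k t\<bar>)" by auto
qed

lemma iter_Lp:
  assumes f: "Lp f"
  shows "Lp ((Aop ^^ k) f) \<and> nrm ((Aop ^^ k) f) \<le> nrm f * (1/2)^k"
proof (induction k)
  case 0 then show ?case using f by simp
next
  case (Suc k)
  note c = Aop_contr[OF conjunct1[OF Suc]]
  have "nrm ((Aop ^^ Suc k) f) \<le> 1/2 * nrm ((Aop ^^ k) f)" using c(2) by simp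
  also have "\<dots> \<le> 1/2 * (nrm f * (1/2)^k)" using conjunct2[OF Suc] by simp
  finally show ?case using c(1) by (simp add: algebra_simps)
qed

lemma fixed_exists:
  assumes f: "Lp f"
  shows "\<exists>g. Lp g \<and> (AE t in M. Top xs N \<alpha> f (\<lambda>_. 0) g t = g t)"
proof -
  define h where "h = (\<lambda>k. (Aop ^^ k) f)"
  have hL: "Lp (h k)" for k using iter_Lp[OF f] by (simp add: h_def)
  have hb: "nrm (h k) \<le> nrm f * (1/2)^k" for k using iter_Lp[OF f] by (simp add: h_def)
  note ser = series_Lp[OF hL hb]
  have hm: "h k \<in> borel_measurable M" for k using Lp_meas[OF hL] .
  define G where "G = (\<lambda>t. \<Sum>k. h k t)"
  have Gm: "G \<in> borel_measurable M" unfolding G_def using hm by measurable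
  have "AE t in M. \<bar>G t\<bar> \<le> \<bar>\<Sum>k. \<bar>h k t\<bar>\<bar>"
  proof (rule eventually_mono[OF ser(1)])
    fix t assume H: "summable (\<lambda>k. \<bar>h k t\<bar>)"
    have "\<bar>G t\<bar> \<le> (\<Sum>k. \<bar>h k t\<bar>)" unfolding G_def by (rule summable_rabs[OF H])
    then show "\<bar>G t\<bar> \<le> \<bar>\<Sum>k. \<bar>h k t\<bar>\<bar>" by simp
  qed
  then have GL: "Lp G" using Lp_mono_AE(1)[OF Gm ser(2)] by simp
  have hS: "h (Suc k) = Aop (h k)" for k by (simp add: h_def)
  have "AE t in M. Top xs N \<alpha> f (\<lambda>_. 0) G t = G t"
    using ser(1)
  proof eventually_elim
    case (elim t)
    have smt: "summable (\<lambda>k. h k t)" using summable_rabs_cancel[OF elim] .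
    have G1: "G t = f t + (\<Sum>k. h (Suc k) t)"
      using suminf_split_head[OF smt] by (simp add: G_def h_def)
    show ?case
    proof (cases t rule: Aop_cases)
      case (1 n0)
      define a where "a = \<alpha> n0 (Linv xs N n0 t)"
      define y where "y = Linv xs N n0 t"
      have hy: "h (Suc k) t = a * h k y" for k using 1(3) by (simp add: hS a_def y_def)
      have AG: "Aop G t = a * G y" using 1(3) by (simp add: a_def y_def)
      have "(\<Sum>k. h (Suc k) t) = a * G y"
      proof (cases "a = 0")
        case True then show ?thesis by (simp add: hy)
      next
        case False
        have "summable (\<lambda>k. \<bar>h (Suc k) t\<bar>)" using summable_ignore_initial_segment[OF elim, of 1] by simp
        then have "summable (\<lambda>k. \<bar>a\<bar> * \<bar>h k y\<bar>)" by (simp add: hy abs_mult)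
        then have "summable (\<lambda>k. (1 / \<bar>a\<bar>) * (\<bar>a\<bar> * \<bar>h k y\<bar>))" by (rule summable_mult)
        then have "summable (\<lambda>k. \<bar>h k y\<bar>)" using False by simp
        then have "summable (\<lambda>k. h k y)" by (rule summable_rabs_cancel)
        then show ?thesis by (simp add: hy suminf_mult G_def)
      qed
      then show ?thesis using G1 AG by (simp add: Top_eq)
    next
      case 2
      have "(\<Sum>k. h (Suc k) t) = 0" using 2(2) by (simp add: hS)
      then show ?thesis using G1 2(2) by (simp add: Top_eq)
    qed
  qed
  with GL show ?thesis by blast
qed

end

context fs_setting begin

lemma F_prop:
  assumes f: "Lp f"
  shows "Lp (fractal p xs N \<alpha> f (\<lambda>_. 0))"
    "AE t in M. f t + Aop (fractal p xs N \<alpha> f (\<lambda>_. 0)) t = fractal p xs N \<alpha> f (\<lambda>_. 0) t"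
proof -
  have "Lp (fractal p xs N \<alpha> f (\<lambda>_. 0)) \<and>
      (AE t in M. Top xs N \<alpha> f (\<lambda>_. 0) (fractal p xs N \<alpha> f (\<lambda>_. 0)) t = fractal p xs N \<alpha> f (\<lambda>_. 0) t)"
    unfolding fractal_def by (rule someI_ex[OF fixed_exists[OF f]])
  then show "Lp (fractal p xs N \<alpha> f (\<lambda>_. 0))"
    "AE t in M. f t + Aop (fractal p xs N \<alpha> f (\<lambda>_. 0)) t = fractal p xs N \<alpha> f (\<lambda>_. 0) t"
    by (auto simp: Top_eq)
qed

lemma two_sided:
  assumes r: "Lp r" and E: "Lp E"
    and ae: "AE t in M. r t - Aop r t = E t"
  shows "nrm r \<le> 2 * nrm E" "nrm E \<le> 3/2 * nrm r"
proof -
  note A = Aop_contr[OF r]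
  have D: "Lp (\<lambda>t. r t - Aop r t)" using Lp_diff(1)[OF r A(1)] .
  have eq: "nrm (\<lambda>t. r t - Aop r t) = nrm E"
    using Lp_cong_AE(2)[OF Lp_meas[OF D] E ae] .
  have "nrm r = nrm (\<lambda>t. (r t - Aop r t) + Aop r t)" by simp
  also have "\<dots> \<le> nrm (\<lambda>t. r t - Aop r t) + nrm (Aop r)" by (rule Lp_add(2)[OF D A(1)])
  finally show "nrm r \<le> 2 * nrm E" using A(2) eq by simp
  have "nrm E \<le> nrm r + nrm (Aop r)" using Lp_diff(2)[OF r A(1)] eq by simp
  then show "nrm E \<le> 3/2 * nrm r" using A(2) by simp
qed

lemma main_basis:
  assumes B: "schauder_basis p xs N fs"
  shows "schauder_basis p xs N (\<lambda>m. fractal p xs N \<alpha> (fs m) (\<lambda>_. 0))"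
proof -
  define Fm where "Fm = (\<lambda>m. fractal p xs N \<alpha> (fs m) (\<lambda>_. 0))"
  have fsL: "Lp (fs m)" for m using B unfolding schauder_basis_def by blast
  have FL: "Lp (Fm m)" for m unfolding Fm_def by (rule F_prop(1)[OF fsL])
  have Fae: "AE t in M. \<forall>m. fs m t + Aop (Fm m) t = Fm m t"
    unfolding AE_all_countable Fm_def using F_prop(2)[OF fsL] by blast
  have ex: "\<exists>!c. (\<lambda>n. nrm (\<lambda>t. h t - (\<Sum>m<n. c m * Fm m t))) \<longlonglongrightarrow> 0" if h: "Lp h" for h
  proof -
    define k where "k = (\<lambda>t. h t - Aop h t)"
    have kL: "Lp k" unfolding k_def by (rule Lp_diff(1)[OF h Aop_contr(1)[OF h]])
    have exk: "\<exists>!c. (\<lambda>n. nrm (\<lambda>t. k t - (\<Sum>m<n. c m * fs m t))) \<longlonglongrightarrow> 0"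
      using B kL unfolding schauder_basis_def by blast
    have est: "nrm (\<lambda>t. h t - (\<Sum>m<n. c m * Fm m t)) \<le> 2 * nrm (\<lambda>t. k t - (\<Sum>m<n. c m * fs m t))
           \<and> nrm (\<lambda>t. k t - (\<Sum>m<n. c m * fs m t)) \<le> 3/2 * nrm (\<lambda>t. h t - (\<Sum>m<n. c m * Fm m t))"
      for c n
    proof -
      define P where "P = (\<lambda>t. \<Sum>m<n. c m * Fm m t)"
      define r where "r = (\<lambda>t. h t - P t)"
      define E where "E = (\<lambda>t. k t - (\<Sum>m<n. c m * fs m t))"
      have PL: "Lp P" unfolding P_def by (rule Lp_sum) (use FL in auto)
      have rL: "Lp r" unfolding r_def by (rule Lp_diff(1)[OF h PL])
      have EL: "Lp E" unfolding E_def by (rule Lp_diff(1)[OF kL Lp_sum]) (use fsL in auto)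
      have "AE t in M. r t - Aop r t = E t"
        using Fae
      proof (rule eventually_mono)
        fix t assume H: "\<forall>m. fs m t + Aop (Fm m) t = Fm m t"
        have "Aop r t = Aop h t - (\<Sum>m<n. c m * Aop (Fm m) t)"
          unfolding r_def P_def by (simp add: Aop_diff Aop_lin)
        moreover have "(\<Sum>m<n. c m * Fm m t) - (\<Sum>m<n. c m * Aop (Fm m) t) = (\<Sum>m<n. c m * fs m t)"
          unfolding sum_subtractf[symmetric] right_diff_distrib[symmetric]
          by (intro sum.cong refl) (simp add: H[rule_format, symmetric])
        ultimately show "r t - Aop r t = E t"
          unfolding r_def E_def k_def P_def by (simp add: algebra_simps)
      qed
      from two_sided[OF rL EL this] show ?thesis unfolding r_def E_def P_def by simp
    qed
    have iff: "(\<lambda>n. nrm (\<lambda>t. h t - (\<Sum>m<n. c m * Fm m t))) \<longlonglongrightarrow> 0 \<longleftrightarrow>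
               (\<lambda>n. nrm (\<lambda>t. k t - (\<Sum>m<n. c m * fs m t))) \<longlonglongrightarrow> 0" for c
    proof
      assume H: "(\<lambda>n. nrm (\<lambda>t. h t - (\<Sum>m<n. c m * Fm m t))) \<longlonglongrightarrow> 0"
      show "(\<lambda>n. nrm (\<lambda>t. k t - (\<Sum>m<n. c m * fs m t))) \<longlonglongrightarrow> 0"
      proof (rule Lim_null_comparison)
        show "\<forall>\<^sub>F n in sequentially. norm (nrm (\<lambda>t. k t - (\<Sum>m<n. c m * fs m t)))
              \<le> 3/2 * nrm (\<lambda>t. h t - (\<Sum>m<n. c m * Fm m t))"
        proof (intro always_eventually allI)
          fix n
          have "Lp (\<lambda>t. \<Sum>m<n. c m * fs m t)" by (rule Lp_sum) (use fsL in auto)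
          then have "0 \<le> nrm (\<lambda>t. k t - (\<Sum>m<n. c m * fs m t))" by (rule nrm_nonneg[OF Lp_diff(1)[OF kL]])
          then show "norm (nrm (\<lambda>t. k t - (\<Sum>m<n. c m * fs m t)))
              \<le> 3/2 * nrm (\<lambda>t. h t - (\<Sum>m<n. c m * Fm m t))" using est[of c n] by simp
        qed
        show "(\<lambda>n. 3/2 * nrm (\<lambda>t. h t - (\<Sum>m<n. c m * Fm m t))) \<longlonglongrightarrow> 0"
          using tendsto_mult_right_zero[OF H] by simp
      qed
    next
      assume H: "(\<lambda>n. nrm (\<lambda>t. k t - (\<Sum>m<n. c m * fs m t))) \<longlonglongrightarrow> 0"
      show "(\<lambda>n. nrm (\<lambda>t. h t - (\<Sum>m<n. c m * Fm m t))) \<longlonglongrightarrow> 0"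
      proof (rule Lim_null_comparison)
        show "\<forall>\<^sub>F n in sequentially. norm (nrm (\<lambda>t. h t - (\<Sum>m<n. c m * Fm m t)))
              \<le> 2 * nrm (\<lambda>t. k t - (\<Sum>m<n. c m * fs m t))"
        proof (intro always_eventually allI)
          fix n
          have "Lp (\<lambda>t. \<Sum>m<n. c m * Fm m t)" by (rule Lp_sum) (use FL in auto)
          then have "0 \<le> nrm (\<lambda>t. h t - (\<Sum>m<n. c m * Fm m t))" by (rule nrm_nonneg[OF Lp_diff(1)[OF h]])
          then show "norm (nrm (\<lambda>t. h t - (\<Sum>m<n. c m * Fm m t)))
              \<le> 2 * nrm (\<lambda>t. k t - (\<Sum>m<n. c m * fs m t))" using est[of c n] by simp
        qed
        show "(\<lambda>n. 2 * nrm (\<lambda>t. k t - (\<Sum>m<n. c m * fs m t))) \<longlonglongrightarrow> 0"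
          using tendsto_mult_right_zero[OF H] by simp
      qed
    qed
    show ?thesis using exk unfolding iff .
  qed
  show ?thesis unfolding schauder_basis_def Fm_def[symmetric] using FL ex by blast
qed

lemma main_bounded:
  assumes B: "schauder_basis p xs N fs" and bd: "bounded_seq p xs N fs"
  shows "bounded_seq p xs N (\<lambda>m. fractal p xs N \<alpha> (fs m) (\<lambda>_. 0))"
proof -
  define Fm where "Fm = (\<lambda>m. fractal p xs N \<alpha> (fs m) (\<lambda>_. 0))"
  have fsL: "Lp (fs m)" for m using B unfolding schauder_basis_def by blast
  obtain k K where kK: "0 < k" "k \<le> K" "\<And>m. k \<le> nrm (fs m) \<and> nrm (fs m) \<le> K"
    using bd unfolding bounded_seq_def by blast
  have est: "2/3 * k \<le> nrm (Fm m) \<and> nrm (Fm m) \<le> 2 * K" for m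
  proof -
    have FL: "Lp (Fm m)" unfolding Fm_def by (rule F_prop(1)[OF fsL])
    have ae: "AE t in M. Fm m t - Aop (Fm m) t = fs m t"
      using F_prop(2)[OF fsL, of m] unfolding Fm_def by (auto elim!: eventually_mono)
    from two_sided[OF FL fsL ae] kK(3)[of m] show ?thesis by simp
  qed
  show ?thesis unfolding bounded_seq_def Fm_def[symmetric]
    by (rule exI[of _ "2/3 * k"], rule exI[of _ "2 * K"]) (use kK est in auto)
qed

end

theorem proposition6p12:
  fixes p :: ereal and N :: nat and xs :: "nat \<Rightarrow> real"
    and \<alpha> :: "nat \<Rightarrow> real \<Rightarrow> real" and fs :: "nat \<Rightarrow> real \<Rightarrow> real"
  assumes "N \<ge> 2"
    and "\<And>i. i < N \<Longrightarrow> xs i < xs (Suc i)"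
    and "1 \<le> p"
    and "\<And>n. n \<in> {1..N} \<Longrightarrow> \<alpha> n \<in> borel_measurable (lebesgue_on (Ivl xs N))"
    and "Lambda xs N \<alpha> < 1 / 2"
    and "schauder_basis p xs N fs"
  shows "schauder_basis p xs N (\<lambda>m. fractal p xs N \<alpha> (fs m) (\<lambda>_. 0)) \<and>
         (bounded_seq p xs N fs \<longrightarrow>
            bounded_seq p xs N (\<lambda>m. fractal p xs N \<alpha> (fs m) (\<lambda>_. 0)))"
proof -
  interpret fs_setting p N xs \<alpha>
    using assms(1-5) by unfold_locales auto
  show ?thesis using main_basis[OF assms(6)] main_bounded[OF assms(6)] by blast
qed

end
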